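(* Let $a$ be a nonnegative measurable function on $\mathbb{R}_+$ with $a\in L_{\infty,loc}([0,\infty))$, and let $b$ be a nonnegative measurable function on $\mathbb{R}_+^2$ such that for a.e. $y>0$, $\int_0^y x\, b(x,y)\,\mathrm{d}x = y$ and $b(x,y)=0$ for a.e. $x>y$. Assume there are $l\ge 0$ and $b_0\ge 0$ such that $n_0(x)=\int_0^x b(y,x)\,\mathrm{d}y\le b_0(1+x^l)$ for all $x\in\mathbb{R}_+$. Let $m\ge 1$ with $m\geq l$. If $f\ge 0$ and $f\in D(A_{0,m})$, then $$\|\mathcal{B}f\|_{[0,m]}=\int_0^\infty a(y)\big(n_m(y)+n_0(y)\big)f(y)\,\mathrm{d}y<\infty,$$ where $(\mathcal{B}f)(x)=\int_x^\infty a(y)b(x,y)f(y)\,\mathrm{d}y$.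
   Context: For $m\ge0$, $n_m(y)=\int_0^y b(x,y)x^m\,\mathrm{d}x$. $X_{0,m}=L_1(\mathbb{R}_+,(1+x^m)\,\mathrm{d}x)$ with norm $\|f\|_{[0,m]}=\int_0^\infty |f(x)|(1+x^m)\,\mathrm{d}x$. $D(A_{0,m})=\{f\in X_{0,m}: af\in X_{0,m}\}$. *)

theory Defs
  imports "HOL-Analysis.Analysis"
begin

text \<open>Functions on \<open>\<real>\<^sub>+ = (0,\<infinity>)\<close> are modelled as \<open>real \<Rightarrow> real\<close>; values off \<open>(0,\<infinity>)\<close> are irrelevant.\<close>

definition norm0m :: "real \<Rightarrow> (real \<Rightarrow> real) \<Rightarrow> ennreal" where
  "norm0m m f = (\<integral>\<^sup>+ x\<in>{0<..}. ennreal (\<bar>f x\<bar> * (1 + x powr m)) \<partial>lborel)"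

definition X0m :: "real \<Rightarrow> (real \<Rightarrow> real) \<Rightarrow> bool" where
  "X0m m f \<longleftrightarrow> set_borel_measurable lborel {0<..} f \<and> norm0m m f < \<infinity>"

definition D_A0m :: "(real \<Rightarrow> real) \<Rightarrow> real \<Rightarrow> (real \<Rightarrow> real) \<Rightarrow> bool" where
  "D_A0m a m f \<longleftrightarrow> X0m m f \<and> X0m m (\<lambda>x. a x * f x)"

definition n_mom :: "(real \<Rightarrow> real \<Rightarrow> real) \<Rightarrow> real \<Rightarrow> real \<Rightarrow> ennreal" where
  "n_mom b m y = (\<integral>\<^sup>+ x\<in>{0<..<y}. ennreal (b x y * x powr m) \<partial>lborel)"

definition n_zero :: "(real \<Rightarrow> real \<Rightarrow> real) \<Rightarrow> real \<Rightarrow> ennreal" where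
  "n_zero b y = (\<integral>\<^sup>+ x\<in>{0<..<y}. ennreal (b x y) \<partial>lborel)"

definition fragB :: "(real \<Rightarrow> real) \<Rightarrow> (real \<Rightarrow> real \<Rightarrow> real) \<Rightarrow> (real \<Rightarrow> real) \<Rightarrow> real \<Rightarrow> real" where
  "fragB a b f x = (LINT y:{x<..}|lborel. a y * b x y * f y)"

definition Linf_loc :: "(real \<Rightarrow> real) \<Rightarrow> bool" where
  "Linf_loc a \<longleftrightarrow> (\<forall>T>0. \<exists>C. AE x in lborel. x \<in> {0..T} \<longrightarrow> \<bar>a x\<bar> \<le> C)"

end

theory Submission
  imports Defs
begin

theorem lemma2p1:
  fixes a :: "real \<Rightarrow> real" and b :: "real \<Rightarrow> real \<Rightarrow> real" and f :: "real \<Rightarrow> real"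
    and l b0 m :: real
  assumes a_meas: "set_borel_measurable lborel {0<..} a"
    and a_nonneg: "\<forall>x>0. a x \<ge> 0"
    and a_loc: "Linf_loc a"
    and b_meas: "set_borel_measurable lborel ({0<..} \<times> {0<..}) (\<lambda>p. b (fst p) (snd p))"
    and b_nonneg: "\<forall>x>0. \<forall>y>0. b x y \<ge> 0"
    and b_mass: "AE y in lborel. y > 0 \<longrightarrow>
                   (\<integral>\<^sup>+ x\<in>{0<..<y}. ennreal (x * b x y) \<partial>lborel) = ennreal y"
    and b_supp: "AE y in lborel. y > 0 \<longrightarrow> (AE x in lborel. x > y \<longrightarrow> b x y = 0)"
    and l_nonneg: "l \<ge> 0" and b0_nonneg: "b0 \<ge> 0"
    and n0_bound: "\<forall>x>0. n_zero b x \<le> ennreal (b0 * (1 + x powr l))"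
    and m_ge1: "m \<ge> 1" and m_ge_l: "m \<ge> l"
    and f_nonneg: "\<forall>x>0. f x \<ge> 0"
    and f_dom: "D_A0m a m f"
  shows "norm0m m (fragB a b f) =
           (\<integral>\<^sup>+ y\<in>{0<..}. ennreal (a y) * (n_mom b m y + n_zero b y) * ennreal (f y) \<partial>lborel)
         \<and> norm0m m (fragB a b f) < \<infinity>"
proof -
  have f_meas: "set_borel_measurable lborel {0<..} f" and af_fin: "norm0m m (\<lambda>x. a x * f x) < \<infinity>"
    using f_dom unfolding D_A0m_def X0m_def by auto
  define A' where "A' y = indicator {0<..} y *\<^sub>R a y" for y :: real
  define F' where "F' y = indicator {0<..} y *\<^sub>R f y" for y :: real
  define B' where "B' p = indicator ({0<..} \<times> {0<..}) p *\<^sub>R b (fst p) (snd p)" for p :: "real \<times> real"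
  have bm[measurable]: "B' \<in> borel_measurable (lborel \<Otimes>\<^sub>M lborel)"
    using b_meas unfolding set_borel_measurable_def lborel_prod B'_def .
  have am[measurable]: "A' \<in> borel_measurable lborel"
    using a_meas unfolding set_borel_measurable_def A'_def .
  have fm[measurable]: "F' \<in> borel_measurable lborel"
    using f_meas unfolding set_borel_measurable_def F'_def .
  define H where "H x y = (if 0 < x \<and> x < y then A' y * B' (x, y) * F' y * (1 + x powr m) else 0)" for x y :: real
  have Hm: "case_prod H \<in> borel_measurable (lborel \<Otimes>\<^sub>M lborel)"
    unfolding H_def case_prod_beta by measurable
  have H_eq: "H x y = (if 0 < x \<and> x < y then a y * b x y * f y * (1 + x powr m) else 0)" for x y
    by (auto simp: H_def A'_def B'_def F'_def)
  have H_nn: "H x y \<ge> 0" for x y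
    unfolding H_eq using a_nonneg b_nonneg f_nonneg
    by (auto intro!: mult_nonneg_nonneg add_nonneg_nonneg)
  have Hem: "(\<lambda>(x, y). ennreal (H x y)) \<in> borel_measurable (lborel \<Otimes>\<^sub>M lborel)"
    using Hm by (simp add: case_prod_beta)
  have bx: "(\<lambda>x. ennreal (g x * b x y) * indicator {0<..<y} x) \<in> borel_measurable lborel"
    if "y > 0" "g \<in> borel_measurable borel" for y and g :: "real \<Rightarrow> real"
  proof -
    have "(\<lambda>x. ennreal (g x * b x y) * indicator {0<..<y} x) = (\<lambda>x. ennreal (g x * B' (x, y)) * indicator {0<..<y} x)"
      using that(1) by (auto simp: B'_def indicator_def fun_eq_iff)
    moreover have "(\<lambda>x. B' (x, y)) \<in> borel_measurable lborel"
      using measurable_compose[OF measurable_Pair2' bm] by simp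
    ultimately show ?thesis using that(2) by simp
  qed
  define R where "R y = ennreal (a y) * (n_mom b m y + n_zero b y) * ennreal (f y) * indicator {0<..} y" for y
  have S3: "(\<integral>\<^sup>+x. ennreal (H x y) \<partial>lborel) = R y" for y
  proof (cases "y > 0")
    case False
    then have "H x y = 0" for x unfolding H_eq by auto
    then show ?thesis using False by (simp add: R_def)
  next
    case True
    have e: "ennreal (H x y) = ennreal (a y * f y) * (ennreal (x powr m * b x y) * indicator {0<..<y} x
              + ennreal (1 * b x y) * indicator {0<..<y} x)" for x
    proof (cases "0 < x \<and> x < y")
      case True
      then have "a y \<ge> 0" "f y \<ge> 0" "b x y \<ge> 0" using a_nonneg b_nonneg f_nonneg by auto
      then show ?thesis using True unfolding H_eq
        by (simp add: ennreal_mult[symmetric] ennreal_plus[symmetric] algebra_simps del: ennreal_plus)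
    qed (auto simp: H_eq)
    have m1: "(\<lambda>x. ennreal (x powr m * b x y) * indicator {0<..<y} x) \<in> borel_measurable lborel"
      using bx[OF True, of "\<lambda>x. x powr m"] by simp
    have m2: "(\<lambda>x. ennreal (b x y) * indicator {0<..<y} x) \<in> borel_measurable lborel"
      using bx[OF True, of "\<lambda>x. 1"] by simp
    have "(\<integral>\<^sup>+x. ennreal (H x y) \<partial>lborel) = ennreal (a y * f y) * ((\<integral>\<^sup>+x. ennreal (x powr m * b x y) * indicator {0<..<y} x \<partial>lborel)
              + (\<integral>\<^sup>+x. ennreal (b x y) * indicator {0<..<y} x \<partial>lborel))"
      unfolding e mult_1
      by (subst nn_integral_cmult, rule borel_measurable_add[OF m1 m2], subst nn_integral_add[OF m1 m2], rule refl)
    also have "\<dots> = R y"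
    proof -
      have nm: "n_mom b m y = (\<integral>\<^sup>+x\<in>{0<..<y}. ennreal (x powr m * b x y) \<partial>lborel)"
        by (simp add: n_mom_def mult.commute)
      have "ennreal (a y * f y) = ennreal (a y) * ennreal (f y)"
        using True a_nonneg f_nonneg by (simp add: ennreal_mult)
      then show ?thesis using True by (simp add: R_def nm n_zero_def mult_ac)
    qed
    finally show ?thesis .
  qed
  have RHS_eq: "(\<integral>\<^sup>+ y\<in>{0<..}. ennreal (a y) * (n_mom b m y + n_zero b y) * ennreal (f y) \<partial>lborel) = (\<integral>\<^sup>+y. R y \<partial>lborel)"
    by (simp add: R_def)
  have nm_bound: "AE y in lborel. y > 0 \<longrightarrow> n_mom b m y \<le> ennreal (y powr m)"
    using b_mass
  proof eventually_elim
    case (elim y)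
    show ?case
    proof
      assume y: "y > 0"
      have "n_mom b m y \<le> (\<integral>\<^sup>+x. ennreal (y powr (m - 1)) * (ennreal (x * b x y) * indicator {0<..<y} x) \<partial>lborel)"
        unfolding n_mom_def
      proof (intro nn_integral_mono)
        fix x
        show "ennreal (b x y * x powr m) * indicator {0<..<y} x \<le> ennreal (y powr (m - 1)) * (ennreal (x * b x y) * indicator {0<..<y} x)"
        proof (cases "0 < x \<and> x < y")
          case True
          then have bn: "b x y \<ge> 0" using b_nonneg y by auto
          have "x powr m = x * x powr (m - 1)" using True by (simp add: powr_mult_base)
          also have "\<dots> \<le> x * y powr (m - 1)" using True m_ge1
            by (intro mult_left_mono powr_mono2) auto
          finally have "b x y * x powr m \<le> y powr (m - 1) * (x * b x y)"
            using bn by (metis mult.commute mult.left_commute mult_left_mono)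
          then show ?thesis using True bn
            by (simp add: ennreal_mult[symmetric] ennreal_leI)
        qed auto
      qed
      also have "\<dots> = ennreal (y powr (m - 1)) * ennreal y"
        using elim y by (subst nn_integral_cmult) (auto intro!: bx[where g="\<lambda>x. x", simplified])
      also have "\<dots> = ennreal (y powr m)"
      proof -
        have "y * y powr (m - 1) = y powr (1 + (m - 1))" using y by (intro powr_mult_base) simp
        then show ?thesis using y by (simp add: ennreal_mult[symmetric] mult.commute)
      qed
      finally show "n_mom b m y \<le> ennreal (y powr m)" .
    qed
  qed
  have RHS_fin: "(\<integral>\<^sup>+y. R y \<partial>lborel) < \<infinity>"
  proof -
    have "(\<integral>\<^sup>+y. R y \<partial>lborel) \<le> (\<integral>\<^sup>+y. ennreal (1 + 2 * b0) * (ennreal (\<bar>a y * f y\<bar> * (1 + y powr m)) * indicator {0<..} y) \<partial>lborel)"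
      using nm_bound
    proof (intro nn_integral_mono_AE, eventually_elim)
      case (elim y)
      show ?case
      proof (cases "y > 0")
        case y: True
        have ay: "a y \<ge> 0" "f y \<ge> 0" using y a_nonneg f_nonneg by auto
        have ylm: "y powr l \<le> 1 + y powr m"
        proof (cases "y \<le> 1")
          case True
          then have "y powr l \<le> 1" using y l_nonneg by (simp add: powr_le1)
          then show ?thesis using powr_ge_zero[of y m] by (smt (verit))
        next
          case False
          then have "y powr l \<le> y powr m" using m_ge_l by (intro powr_mono) auto
          then show ?thesis by simp
        qed
        have n0: "n_zero b y \<le> ennreal (2 * b0 * (1 + y powr m))"
        proof -
          have "b0 * (1 + y powr l) \<le> b0 * (2 * (1 + y powr m))"
          proof (rule mult_left_mono)
            have "0 \<le> y powr m" by simp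
            then show "1 + y powr l \<le> 2 * (1 + y powr m)" using ylm by (smt (verit))
          qed (use b0_nonneg in simp)
          then have "ennreal (b0 * (1 + y powr l)) \<le> ennreal (2 * b0 * (1 + y powr m))"
            by (intro ennreal_leI) (simp add: mult_ac)
          then show ?thesis using n0_bound y by (meson order_trans)
        qed
        have "n_mom b m y + n_zero b y \<le> ennreal (y powr m) + ennreal (2 * b0 * (1 + y powr m))"
          using elim y n0 by (intro add_mono) auto
        also have "\<dots> \<le> ennreal ((1 + 2 * b0) * (1 + y powr m))"
          using b0_nonneg by (subst ennreal_plus[symmetric]) (auto intro!: ennreal_leI simp: algebra_simps)
        finally have le: "n_mom b m y + n_zero b y \<le> ennreal ((1 + 2 * b0) * (1 + y powr m))" .
        have "R y = ennreal (a y * f y) * (n_mom b m y + n_zero b y)"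
          using y ay by (simp add: R_def ennreal_mult mult_ac)
        also have "\<dots> \<le> ennreal (a y * f y) * ennreal ((1 + 2 * b0) * (1 + y powr m))"
          by (intro mult_left_mono le) auto
        also have "\<dots> = ennreal (1 + 2 * b0) * (ennreal (\<bar>a y * f y\<bar> * (1 + y powr m)) * indicator {0<..} y)"
        proof -
          have e1: "\<bar>a y * f y\<bar> = a y * f y" using ay by simp
          have "ennreal (a y * f y) * ennreal ((1 + 2 * b0) * (1 + y powr m)) = ennreal (a y * f y * ((1 + 2 * b0) * (1 + y powr m)))"
            using ay by (simp add: ennreal_mult')
          also have "\<dots> = ennreal ((1 + 2 * b0) * (a y * f y * (1 + y powr m)))" by (simp add: mult_ac)
          also have "\<dots> = ennreal (1 + 2 * b0) * ennreal (a y * f y * (1 + y powr m))"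
            using b0_nonneg by (simp add: ennreal_mult')
          finally show ?thesis using y e1 by simp
        qed
        finally show ?thesis .
      qed (simp add: R_def)
    qed
    also have "\<dots> = ennreal (1 + 2 * b0) * norm0m m (\<lambda>x. a x * f x)"
      unfolding norm0m_def
    proof (subst nn_integral_cmult)
      show "(\<lambda>y. ennreal (\<bar>a y * f y\<bar> * (1 + y powr m)) * indicator {0<..} y) \<in> borel_measurable lborel"
      proof -
        have "(\<lambda>y. ennreal (\<bar>a y * f y\<bar> * (1 + y powr m)) * indicator {0<..} y) = (\<lambda>y. ennreal (\<bar>A' y * F' y\<bar> * (1 + y powr m)) * indicator {0<..} y)"
          by (auto simp: A'_def F'_def indicator_def fun_eq_iff)
        then show ?thesis by simp
      qed
    qed simp
    also have "\<dots> < \<infinity>" using af_fin by (simp add: ennreal_mult_less_top)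
    finally show ?thesis .
  qed
  define K where "K x = (\<integral>\<^sup>+y. ennreal (H x y) \<partial>lborel)" for x
  have Km: "K \<in> borel_measurable lborel"
    unfolding K_def using lborel.borel_measurable_nn_integral[of "\<lambda>x y. ennreal (H x y)" lborel] Hem by simp
  have KR: "(\<integral>\<^sup>+x. K x \<partial>lborel) = (\<integral>\<^sup>+y. R y \<partial>lborel)"
    unfolding K_def
    by (subst lborel_pair.Fubini'[of "\<lambda>x y. ennreal (H x y)", symmetric]) (use Hem S3 in simp_all)
  have "AE x in lborel. K x \<noteq> \<infinity>"
    by (rule nn_integral_PInf_AE[OF Km]) (use KR RHS_fin in simp)
  then have AEK: "AE x in lborel. ennreal (\<bar>fragB a b f x\<bar> * (1 + x powr m)) * indicator {0<..} x = K x"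
  proof eventually_elim
    case (elim x)
    show ?case
    proof (cases "x > 0")
      case False
      then have "H x y = 0" for y unfolding H_eq by auto
      then show ?thesis using False by (simp add: K_def)
    next
      case True
      define G where "G y = (if x < y then a y * b x y * f y else 0)" for y
      have pos: "1 + x powr m > 0" by (smt (verit) powr_ge_zero)
      have HG: "H x y = G y * (1 + x powr m)" for y by (simp add: H_eq G_def True)
      have Gnn: "G y \<ge> 0" for y
        using a_nonneg b_nonneg f_nonneg True unfolding G_def by auto
      have "(\<lambda>y. H x y) \<in> borel_measurable lborel"
        using measurable_compose[OF measurable_Pair1' Hm] by simp
      moreover have "G = (\<lambda>y. H x y / (1 + x powr m))" using pos by (simp add: HG fun_eq_iff)
      ultimately have Gm: "G \<in> borel_measurable lborel" by simp
      have KG: "K x = (\<integral>\<^sup>+y. ennreal (G y) \<partial>lborel) * ennreal (1 + x powr m)"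
      proof -
        have "(\<lambda>y. ennreal (G y * (1 + x powr m))) = (\<lambda>y. ennreal (G y) * ennreal (1 + x powr m))"
          by (intro ext ennreal_mult) (use Gnn pos in auto)
        then show ?thesis unfolding K_def HG
          by (simp only:) (rule nn_integral_multc, use Gm in simp)
      qed
      have Gfin: "(\<integral>\<^sup>+y. ennreal (G y) \<partial>lborel) < \<infinity>"
        using elim pos unfolding KG by (auto simp: ennreal_mult_eq_top_iff top.not_eq_extremum)
      have Gint: "integrable lborel G"
        by (rule integrableI_nonneg) (use Gm Gnn Gfin in auto)
      have GI: "(\<integral>\<^sup>+y. ennreal (G y) \<partial>lborel) = ennreal (integral\<^sup>L lborel G)"
        by (rule nn_integral_eq_integral) (use Gint Gnn in auto)
      have FB: "fragB a b f x = integral\<^sup>L lborel G"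
        unfolding fragB_def set_lebesgue_integral_def
        by (intro Bochner_Integration.integral_cong) (auto simp: G_def indicator_def)
      have "integral\<^sup>L lborel G \<ge> 0" by (intro Bochner_Integration.integral_nonneg Gnn)
      then show ?thesis using True pos unfolding KG GI FB by (simp add: ennreal_mult)
    qed
  qed
  have "norm0m m (fragB a b f) = (\<integral>\<^sup>+x. K x \<partial>lborel)"
    unfolding norm0m_def by (rule nn_integral_cong_AE[OF AEK])
  then show ?thesis using KR RHS_eq RHS_fin by simp
qed

end
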